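(* The multiplication map $\widetilde{\mathrm{Sym}}\otimes\big(\mathrm{NSym}\,\square_{\mathrm{Sym}}\,\mathbb{Z}\big)\to\mathrm{NSym}$ is an isomorphism.
   Context: $\mathrm{NSym}=\mathbb{Z}\langle Z_1,Z_2,\ldots\rangle$ is the free associative algebra (non-commutative symmetric functions) with coproduct $\Delta Z_n=\sum_{p+q=n}Z_p\otimes Z_q$ ($Z_0=1$); $\mathrm{Sym}=\mathbb{Z}[Z_1,Z_2,\ldots]$ is its abelianization with projection $\pi\colon\mathrm{NSym}\to\mathrm{Sym}$. The cotensor product is $\mathrm{NSym}\,\square_{\mathrm{Sym}}\,\mathbb{Z}=\{n\in\mathrm{NSym}:(\mathrm{id}\otimes\pi)\Delta n=n\otimes1\}$. $\widetilde{\mathrm{Sym}}\subset\mathrm{NSym}$ is the $\mathbb{Z}$-span of the monomials $Z_{i_1}^{a_1}\cdots Z_{i_n}^{a_n}$ with $i_1\le\cdots\le i_n$. The tensor product is over $\mathbb{Z}$. *)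

theory Defs
  imports Main "HOL-Library.Multiset"
begin

text \<open>
  Model of NSym = Z<Z_1,Z_2,...>: an element is a finitely supported function from words
  (lists of letters) to integers; the word [i1,...,ik] stands for the monomial Z_i1 ... Z_ik.
\<close>

definition supp :: "('a \<Rightarrow> 'b::zero) \<Rightarrow> 'a set" where
  "supp f = {x. f x \<noteq> 0}"

definition nsym :: "(nat list \<Rightarrow> int) set" where
  "nsym = {x. finite (supp x) \<and> (\<forall>w. x w \<noteq> 0 \<longrightarrow> 0 \<notin> set w)}"

definition nmult :: "(nat list \<Rightarrow> int) \<Rightarrow> (nat list \<Rightarrow> int) \<Rightarrow> (nat list \<Rightarrow> int)" where
  "nmult x y = (\<lambda>w. \<Sum>k\<le>length w. x (take k w) * y (drop k w))"

definition mono :: "nat list \<Rightarrow> (nat list \<Rightarrow> int)" where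
  "mono s = (\<lambda>w. if w = s then 1 else 0)"

text \<open>
  Terms of the coproduct of a word w: Delta (Z_w1...Z_wk) = prod_j (sum_{p+q=w_j} Z_p (x) Z_q)
  with Z_0 = 1; the terms are indexed by pairs (p,q) of lists with p+q = w componentwise,
  and the term is (filter nonzero p) (x) (filter nonzero q).
\<close>
definition coprod_splits :: "nat list \<Rightarrow> (nat list \<times> nat list) set" where
  "coprod_splits w = {(p, q). length p = length w \<and> length q = length w \<and>
                        (\<forall>i<length w. p ! i + q ! i = w ! i)}"

text \<open>
  NSym (x) Sym is free on pairs (word, multiset of positive letters); the projection
  pi : NSym -> Sym sends a word to its multiset of letters.  (id (x) pi) Delta x is the
  function below, giving the coefficient of u (x) m.
\<close>
definition id_pi_coprod :: "(nat list \<Rightarrow> int) \<Rightarrow> (nat list \<times> nat multiset \<Rightarrow> int)" where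
  "id_pi_coprod x = (\<lambda>(u, m). \<Sum>w\<in>supp x. x w *
       int (card {(p, q) \<in> coprod_splits w.
                     filter (\<lambda>i. i \<noteq> 0) p = u \<and> mset (filter (\<lambda>i. i \<noteq> 0) q) = m}))"

text \<open>Cotensor product NSym \<box>_Sym Z = {n. (id (x) pi) Delta n = n (x) 1}.\<close>
definition cotensor :: "(nat list \<Rightarrow> int) set" where
  "cotensor = {x \<in> nsym. \<forall>u m. id_pi_coprod x (u, m) = (if m = {#} then x u else 0)}"

text \<open>Basis of \<open>Sym~\<close>: monomials Z_i1^a1 ... Z_in^an with i1 <= ... <= in, i.e. sorted words.\<close>
definition symt_basis :: "nat list set" where
  "symt_basis = {w. sorted w \<and> 0 \<notin> set w}"

text \<open>
  Since \<open>Sym~\<close> is free on symt_basis, \<open>Sym~ \<otimes> C\<close> is identified with finitely supported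
  families (c_s) indexed by s in symt_basis with values in C; s (x) c corresponds to the
  family with c at s.
\<close>
definition symt_tensor_cotensor :: "(nat list \<Rightarrow> nat list \<Rightarrow> int) set" where
  "symt_tensor_cotensor = {f. finite {s. f s \<noteq> (\<lambda>_. 0)} \<and>
                               (\<forall>s. s \<notin> symt_basis \<longrightarrow> f s = (\<lambda>_. 0)) \<and>
                               (\<forall>s. f s \<in> cotensor)}"

definition mult_map :: "(nat list \<Rightarrow> nat list \<Rightarrow> int) \<Rightarrow> (nat list \<Rightarrow> int)" where
  "mult_map f = (\<lambda>w. \<Sum>s\<in>{s. f s \<noteq> (\<lambda>_. 0)}. nmult (mono s) (f s) w)"

end

theory Submission
  imports Defs
begin


definition nz :: "nat list \<Rightarrow> nat list" where "nz = filter (\<lambda>i. i \<noteq> 0)"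

definition SS :: "nat list \<Rightarrow> (nat list \<Rightarrow> nat list \<Rightarrow> 'a::comm_monoid_add) \<Rightarrow> 'a" where
  "SS w g = (\<Sum>(p,q)\<in>coprod_splits w. g p q)"

lemma cs_Nil: "coprod_splits [] = {([],[])}"
  by (auto simp: coprod_splits_def)

lemma cs_Cons: "coprod_splits (a#w) = (\<lambda>(i,(p,q)). (i#p, (a-i)#q)) ` ({..a} \<times> coprod_splits w)"
proof
  show "coprod_splits (a#w) \<subseteq> (\<lambda>(i,(p,q)). (i#p, (a-i)#q)) ` ({..a} \<times> coprod_splits w)"
  proof
    fix x assume x: "x \<in> coprod_splits (a#w)"
    obtain p q where xpq: "x = (p,q)" by force
    from x xpq obtain i p' where p: "p = i#p'" by (cases p) (auto simp: coprod_splits_def)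
    from x xpq obtain j q' where q: "q = j#q'" by (cases q) (auto simp: coprod_splits_def)
    have h: "\<forall>k<Suc (length w). p ! k + q ! k = (a#w) ! k" "length p = Suc (length w)" "length q = Suc (length w)"
      using x xpq by (auto simp: coprod_splits_def)
    from h(1)[rule_format, of 0] have ij: "i + j = a" by (simp add: p q)
    have "(p', q') \<in> coprod_splits w"
      unfolding coprod_splits_def using h p q by auto
    then show "x \<in> (\<lambda>(i,(p,q)). (i#p, (a-i)#q)) ` ({..a} \<times> coprod_splits w)"
      using ij xpq p q by (auto intro!: image_eqI[where x="(i,(p',q'))"])
  qed
next
  show "(\<lambda>(i,(p,q)). (i#p, (a-i)#q)) ` ({..a} \<times> coprod_splits w) \<subseteq> coprod_splits (a#w)"
    by (auto simp: coprod_splits_def nth_Cons split: nat.splits)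
qed

lemma finite_cs[simp]: "finite (coprod_splits w)"
  by (induction w) (auto simp: cs_Nil cs_Cons)

lemma inj_cs: "inj_on (\<lambda>(i,(p,q)). (i#p, (a-i)#q)) X"
  by (auto simp: inj_on_def)

lemma SS_Nil[simp]: "SS [] g = g [] []"
  by (simp add: SS_def cs_Nil)

lemma SS_Cons: "SS (a#w) g = (\<Sum>i\<le>a. SS w (\<lambda>p q. g (i#p) ((a-i)#q)))"
  unfolding SS_def cs_Cons
  apply (subst sum.reindex[OF inj_cs])
  apply (simp add: sum.cartesian_product comp_def case_prod_unfold)
  done

lemma SS_cong: "(\<And>p q. (p,q)\<in>coprod_splits w \<Longrightarrow> g p q = h p q) \<Longrightarrow> SS w g = SS w h"
  unfolding SS_def by (rule sum.cong) auto

lemma SS_sum: "SS w (\<lambda>p q. \<Sum>x\<in>A. f x p q) = (\<Sum>x\<in>A. SS w (f x))"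
  unfolding SS_def by (simp add: case_prod_unfold sum.swap[of _ A])

lemma SS_add: "SS w (\<lambda>p q. f p q + g p q) = SS w f + SS w g"
  unfolding SS_def by (simp add: case_prod_unfold sum.distrib)

lemma SS_zero[simp]: "SS w (\<lambda>p q. 0) = 0"
  unfolding SS_def by simp

lemma SS_cmult: "SS w (\<lambda>p q. (c::'a::comm_ring_1) * f p q) = c * SS w f"
  unfolding SS_def by (simp add: case_prod_unfold sum_distrib_left)

lemma SS_diff: "SS w (\<lambda>p q. (f p q::'a::ab_group_add) - g p q) = SS w f - SS w g"
  unfolding SS_def by (simp add: case_prod_unfold sum_subtractf)

lemma SS_swap: "SS s (\<lambda>p q. SS t (\<lambda>a b. K p q a b)) = SS t (\<lambda>a b. SS s (\<lambda>p q. K p q a b))"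
  unfolding SS_def by (simp add: case_prod_unfold sum.swap[of _ "coprod_splits s"])

lemma SS_append: "SS (s@t) g = SS s (\<lambda>p1 q1. SS t (\<lambda>p2 q2. g (p1@p2) (q1@q2)))"
proof (induction s arbitrary: g)
  case Nil then show ?case by simp
next
  case (Cons a s)
  show ?case by (simp add: SS_Cons Cons.IH)
qed

lemma tri_sum: "(\<Sum>i\<le>(x::nat). \<Sum>j\<le>i. F j (i-j)) = (\<Sum>j\<le>x. \<Sum>k\<le>x-j. (F j k :: 'a::comm_monoid_add))"
proof -
  have "(\<Sum>i\<le>x. \<Sum>j\<le>i. F j (i-j)) = (\<Sum>(j,k)\<in>{(j,k). j+k \<le> x}. F j k)"
    by (rule sum.triangle_reindex_eq[symmetric])
  also have "{(j,k). j+k \<le> x} = Sigma {..x} (\<lambda>j. {..x-j})" by auto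
  also have "(\<Sum>(j,k)\<in>Sigma {..x} (\<lambda>j. {..x-j}). F j k) = (\<Sum>j\<le>x. \<Sum>k\<le>x-j. F j k)"
    by (rule sum.Sigma[symmetric]) auto
  finally show ?thesis .
qed

lemma SS_coassoc: "SS w (\<lambda>p q. SS p (\<lambda>a b. G a b q)) = SS w (\<lambda>a t. SS t (\<lambda>b c. G a b c))"
proof (induction w arbitrary: G)
  case Nil then show ?case by simp
next
  case (Cons x w)
  define F where "F j k = SS w (\<lambda>a t. SS t (\<lambda>b c. G (j#a) (k#b) ((x-j-k)#c)))" for j k
  have "SS (x#w) (\<lambda>p q. SS p (\<lambda>a b. G a b q))
     = (\<Sum>i\<le>x. \<Sum>j\<le>i. SS w (\<lambda>p q. SS p (\<lambda>a b. G (j#a) ((i-j)#b) ((x-i)#q))))"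
    by (simp add: SS_Cons SS_sum)
  also have "\<dots> = (\<Sum>i\<le>x. \<Sum>j\<le>i. F j (i-j))"
    by (intro sum.cong refl) (simp add: F_def Cons.IH)
  also have "\<dots> = (\<Sum>j\<le>x. \<Sum>k\<le>x-j. F j k)" by (rule tri_sum)
  also have "\<dots> = SS (x#w) (\<lambda>a t. SS t (\<lambda>b c. G a b c))"
    by (simp add: SS_Cons SS_sum F_def)
  finally show ?case .
qed


definition S :: "nat list \<Rightarrow> (nat list \<Rightarrow> nat multiset \<Rightarrow> 'a::comm_monoid_add) \<Rightarrow> 'a" where
  "S w g = SS w (\<lambda>p q. g (nz p) (mset (nz q)))"

definition N :: "nat list \<Rightarrow> nat list \<Rightarrow> nat multiset \<Rightarrow> int" where
  "N w u m = S w (\<lambda>u' m'. of_bool (u' = u \<and> m' = m))"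

lemma nz_Cons: "nz (i#p) = nz [i] @ nz p" by (simp add: nz_def)
lemma nz_append: "nz (p@q) = nz p @ nz q" by (simp add: nz_def)
lemma mset_nz_Cons: "mset (nz (k#q)) = mset (nz [k]) + mset (nz q)" by (simp add: nz_def)

lemma S_Cons: "S (a#w) h = (\<Sum>i\<le>a. S w (\<lambda>u m. h (nz [i] @ u) (mset (nz [a-i]) + m)))"
  unfolding S_def SS_Cons by (subst nz_Cons) (subst mset_nz_Cons, rule refl)

lemma S_append: "S (s@t) g = S s (\<lambda>u1 m1. S t (\<lambda>u2 m2. g (u1@u2) (m1+m2)))"
  unfolding S_def SS_append by (simp add: nz_append)

lemma S_nz: "S (nz p) h = S p h"
proof (induction p arbitrary: h)
  case Nil then show ?case by (simp add: nz_def)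
next
  case (Cons a p)
  show ?case
  proof (cases "a = 0")
    case True
    then show ?thesis using Cons.IH by (simp add: S_Cons nz_def)
  next
    case False
    then have "nz (a#p) = a # nz p" by (simp add: nz_def)
    then show ?thesis by (simp add: S_Cons Cons.IH)
  qed
qed

lemma S_cong: "(\<And>p q. (p,q)\<in>coprod_splits w \<Longrightarrow> g (nz p) (mset (nz q)) = h (nz p) (mset (nz q))) \<Longrightarrow> S w g = S w h"
  unfolding S_def by (rule SS_cong)

lemma S_sum: "S w (\<lambda>u m. \<Sum>x\<in>A. f x u m) = (\<Sum>x\<in>A. S w (f x))"
  unfolding S_def by (rule SS_sum)

lemma S_cmult: "S w (\<lambda>u m. (c::'a::comm_ring_1) * f u m) = c * S w f"
  unfolding S_def by (rule SS_cmult)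

lemma S_swap: "S s (\<lambda>u m. S t (\<lambda>u' m'. K u m u' m')) = S t (\<lambda>u' m'. S s (\<lambda>u m. K u m u' m'))"
  unfolding S_def by (rule SS_swap)

lemma SS_single: "(p0,q0) \<in> coprod_splits w \<Longrightarrow> (\<And>p q. (p,q)\<in>coprod_splits w \<Longrightarrow> (p,q) \<noteq> (p0,q0) \<Longrightarrow> g p q = 0)
   \<Longrightarrow> SS w g = g p0 q0"
proof -
  assume a: "(p0,q0) \<in> coprod_splits w" and b: "(\<And>p q. (p,q)\<in>coprod_splits w \<Longrightarrow> (p,q) \<noteq> (p0,q0) \<Longrightarrow> g p q = 0)"
  have "SS w g = (\<lambda>(p,q). g p q) (p0,q0) + (\<Sum>x\<in>coprod_splits w - {(p0,q0)}. (\<lambda>(p,q). g p q) x)"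
    unfolding SS_def using a by (intro sum.remove) simp_all
  also have "(\<Sum>x\<in>coprod_splits w - {(p0,q0)}. (\<lambda>(p,q). g p q) x) = 0"
    by (rule sum.neutral) (use b in force)
  finally show ?thesis by simp
qed

lemma cs_len: "(p,q)\<in>coprod_splits w \<Longrightarrow> length p = length w \<and> length q = length w"
  by (simp add: coprod_splits_def)

lemma cs_nth: "(p,q)\<in>coprod_splits w \<Longrightarrow> i < length w \<Longrightarrow> p!i + q!i = w!i"
  by (simp add: coprod_splits_def)

lemma sum_list_nth: "sum_list (xs::nat list) = (\<Sum>i<length xs. xs!i)"
  by (simp add: sum_list_sum_nth atLeast0LessThan)

lemma cs_sum: "(p,q)\<in>coprod_splits w \<Longrightarrow> sum_list p + sum_list q = sum_list w"
proof -
  assume h: "(p,q)\<in>coprod_splits w"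
  have "sum_list p + sum_list q = (\<Sum>i<length w. p!i + q!i)"
    using cs_len[OF h] by (simp add: sum_list_nth sum.distrib)
  also have "\<dots> = sum_list w" using cs_nth[OF h] by (simp add: sum_list_nth)
  finally show ?thesis .
qed

lemma sum_nz: "sum_list (nz q) = sum_list q"
  by (induction q) (auto simp: nz_def)

lemma sum_mset_nz: "sum_mset (mset (nz q)) = sum_list q"
  by (simp add: sum_mset_sum_list sum_nz)

lemma nz_id: "0 \<notin> set w \<Longrightarrow> nz w = w"
  by (induction w) (auto simp: nz_def)

lemma nz_nil_iff: "nz q = [] \<longleftrightarrow> (\<forall>i<length q. q!i = 0)"
  by (simp add: nz_def filter_empty_conv all_set_conv_all_nth)

lemma nz_repl[simp]: "nz (replicate n 0) = []" by (simp add: nz_def)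

lemma zero_not_nz: "0 \<notin> set (nz q)" by (simp add: nz_def)

lemma sum_list_zero_iff: "sum_list (q::nat list) = 0 \<longleftrightarrow> (\<forall>i<length q. q!i = 0)"
  by (simp add: all_set_conv_all_nth)

lemma cs_repl: "(replicate (length w) 0, w) \<in> coprod_splits w"
  by (simp add: coprod_splits_def)

lemma cs_repl2: "(w, replicate (length w) 0) \<in> coprod_splits w"
  by (simp add: coprod_splits_def)

lemma S_counit: "0 \<notin> set w \<Longrightarrow> S w (\<lambda>u m. if m = {#} then g u else 0) = g w"
  unfolding S_def
proof (subst SS_single[OF cs_repl2])
  fix p q assume pq: "(p,q) \<in> coprod_splits w" "(p,q) \<noteq> (w, replicate (length w) 0)"
  show "(if mset (nz q) = {#} then g (nz p) else 0) = 0"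
  proof (cases "mset (nz q) = {#}")
    case True
    then have q0: "\<forall>i<length q. q!i = 0" using nz_nil_iff by auto
    have "p = w" using cs_len[OF pq(1)] cs_nth[OF pq(1)] q0 by (intro nth_equalityI) auto
    moreover have "q = replicate (length w) 0" using cs_len[OF pq(1)] q0
      by (intro nth_equalityI) auto
    ultimately show ?thesis using pq(2) by simp
  qed simp
next
  assume "0 \<notin> set w"
  then show "(if mset (nz (replicate (length w) 0)) = {#} then g (nz w) else 0) = g w"
    by (simp add: nz_id)
qed

lemma S_top: "0 \<notin> set w \<Longrightarrow> S w (\<lambda>u m. if sum_list w \<le> sum_mset m then g u m else 0) = g [] (mset w)"
  unfolding S_def
proof (subst SS_single[OF cs_repl])
  fix p q assume pq: "(p,q) \<in> coprod_splits w" "(p,q) \<noteq> (replicate (length w) 0, w)"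
  show "(if sum_list w \<le> sum_mset (mset (nz q)) then g (nz p) (mset (nz q)) else 0) = 0"
  proof (cases "sum_list w \<le> sum_mset (mset (nz q))")
    case True
    then have "sum_list p = 0" using cs_sum[OF pq(1)] sum_mset_nz[of q] by linarith
    then have p0: "\<forall>i<length p. p!i = 0" using sum_list_zero_iff by blast
    have "q = w" using cs_len[OF pq(1)] cs_nth[OF pq(1)] p0 by (intro nth_equalityI) auto
    moreover have "p = replicate (length w) 0" using cs_len[OF pq(1)] p0
      by (intro nth_equalityI) auto
    ultimately show ?thesis using pq(2) by simp
  qed simp
next
  assume "0 \<notin> set w"
  then show "(if sum_list w \<le> sum_mset (mset (nz w)) then g (nz (replicate (length w) 0)) (mset (nz w)) else 0) = g [] (mset w)"
    by (simp add: nz_id sum_mset_sum_list)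
qed

lemma S_deg: "(\<And>u m. sum_mset m \<le> sum_list w \<Longrightarrow> g u m = h u m) \<Longrightarrow> S w g = S w h"
  by (rule S_cong) (metis cs_sum le_add2 sum_mset_nz)



lemma int_card_filter: "finite A \<Longrightarrow> int (card {x\<in>A. P x}) = (\<Sum>x\<in>A. of_bool (P x))"
proof -
  assume A: "finite A"
  have "int (card {x\<in>A. P x}) = (\<Sum>x\<in>{x\<in>A. P x}. 1)" by simp
  also have "\<dots> = (\<Sum>x\<in>A. if P x then 1 else 0)" using A by (rule sum.inter_filter)
  also have "\<dots> = (\<Sum>x\<in>A. of_bool (P x))" by (rule sum.cong) auto
  finally show ?thesis .
qed

lemma id_pi_N: "id_pi_coprod x (u,m) = (\<Sum>w\<in>supp x. x w * N w u m)"
proof -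
  have "int (card {(p, q) \<in> coprod_splits w. filter (\<lambda>i. i \<noteq> 0) p = u \<and> mset (filter (\<lambda>i. i \<noteq> 0) q) = m})
     = N w u m" for w
  proof -
    have "{(p, q) \<in> coprod_splits w. filter (\<lambda>i. i \<noteq> 0) p = u \<and> mset (filter (\<lambda>i. i \<noteq> 0) q) = m}
      = {x \<in> coprod_splits w. (\<lambda>(p,q). nz p = u \<and> mset (nz q) = m) x}" by (auto simp: nz_def)
    then show ?thesis
      by (simp add: int_card_filter N_def S_def SS_def case_prod_unfold)
  qed
  then show ?thesis unfolding id_pi_coprod_def by simp
qed

lemma ph_eq: "finite V \<Longrightarrow> supp x \<subseteq> V \<Longrightarrow> id_pi_coprod x (u,m) = (\<Sum>w\<in>V. x w * N w u m)"
  unfolding id_pi_N by (rule sum.mono_neutral_left) (auto simp: supp_def)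

lemma N_counit: "0 \<notin> set w \<Longrightarrow> N w u {#} = of_bool (w = u)"
proof -
  assume w: "0 \<notin> set w"
  have "N w u {#} = S w (\<lambda>u' m'. if m' = {#} then of_bool (u' = u) else 0)"
    unfolding N_def by (rule arg_cong[where f="S w"]) (auto simp: fun_eq_iff)
  also have "\<dots> = of_bool (w = u)" using S_counit[OF w] .
  finally show ?thesis .
qed

lemma nsym_counit: "x \<in> nsym \<Longrightarrow> id_pi_coprod x (u,{#}) = x u"
proof -
  assume x: "x \<in> nsym"
  have "id_pi_coprod x (u,{#}) = (\<Sum>w\<in>supp x. x w * of_bool (w = u))"
    unfolding id_pi_N
    by (rule sum.cong) (use x in \<open>auto simp: N_counit nsym_def supp_def\<close>)
  also have "\<dots> = (\<Sum>w\<in>supp x. if w = u then x u else 0)" by (rule sum.cong) auto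
  also have "\<dots> = x u" using x by (simp add: nsym_def) (auto simp: supp_def)
  finally show ?thesis .
qed

lemma N_nonzero: "N w u m \<noteq> 0 \<Longrightarrow> \<exists>(p,q)\<in>coprod_splits w. nz p = u \<and> mset (nz q) = m"
proof (rule ccontr)
  assume a: "N w u m \<noteq> 0" and b: "\<not> (\<exists>(p,q)\<in>coprod_splits w. nz p = u \<and> mset (nz q) = m)"
  have "N w u m = (\<Sum>(p,q)\<in>coprod_splits w. of_bool (nz p = u \<and> mset (nz q) = m))"
    by (simp add: N_def S_def SS_def)
  also have "\<dots> = 0"
  proof (rule sum.neutral, rule ballI)
    fix x assume "x \<in> coprod_splits w"
    then show "(case x of (p,q) \<Rightarrow> (of_bool (nz p = u \<and> mset (nz q) = m)::int)) = 0"
      using b by (cases x) auto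
  qed
  finally show False using a by simp
qed

lemma N_zero_mem: "0 \<in># m \<Longrightarrow> N w u m = 0"
proof (rule ccontr)
  assume "0 \<in># m" "N w u m \<noteq> 0"
  then obtain p q where "(p,q) \<in> coprod_splits w" "mset (nz q) = m" using N_nonzero by blast
  then show False using \<open>0 \<in># m\<close> zero_not_nz[of q] by auto
qed

lemma N_deg: "N w u m \<noteq> 0 \<Longrightarrow> sum_mset m \<le> sum_list w"
proof -
  assume "N w u m \<noteq> 0"
  then obtain p q where pq: "(p,q) \<in> coprod_splits w" "mset (nz q) = m" using N_nonzero by blast
  have "sum_mset m = sum_list q" using pq(2) sum_mset_nz by blast
  also have "\<dots> \<le> sum_list w" using cs_sum[OF pq(1)] by linarith
  finally show ?thesis .
qed





lemma nmult_mono: "nmult (mono s) c w = (if take (length s) w = s then c (drop (length s) w) else 0)"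
proof -
  have "nmult (mono s) c w = (\<Sum>k\<le>length w. if k = length s then (if take (length s) w = s then c (drop (length s) w) else 0) else 0)"
    unfolding nmult_def mono_def
    by (rule sum.cong) auto
  also have "\<dots> = (if take (length s) w = s then c (drop (length s) w) else 0)"
    by (auto simp: sum.delta)
  finally show ?thesis .
qed

lemma nmult_mono_app: "nmult (mono s) c (s@v) = c v"
  by (simp add: nmult_mono)

lemma supp_nmult_mono: "supp (nmult (mono s) c) \<subseteq> (\<lambda>v. s@v) ` supp c"
proof
  fix w assume "w \<in> supp (nmult (mono s) c)"
  then have h: "take (length s) w = s" "c (drop (length s) w) \<noteq> 0"
    by (auto simp: supp_def nmult_mono split: if_splits)
  then have "w = s @ drop (length s) w" by (metis append_take_drop_id)
  then show "w \<in> (\<lambda>v. s@v) ` supp c" using h(2) by (auto simp: supp_def)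
qed

lemma phi_smul: "finite (supp c) \<Longrightarrow> id_pi_coprod (nmult (mono s) c) (u,m) = (\<Sum>v\<in>supp c. c v * N (s@v) u m)"
  apply (subst ph_eq[OF _ supp_nmult_mono])
   apply simp
  apply (subst sum.reindex)
   apply (simp add: inj_on_def)
  apply (simp add: nmult_mono_app)
  done

lemma mset_split_iff: "(m1 + m2 = (m::'a multiset)) \<longleftrightarrow> (m1 \<subseteq># m \<and> m2 = m - m1)"
  by auto

lemma PhiSC:
  assumes c: "c \<in> cotensor" and s: "0 \<notin> set s" and deg: "sum_list s \<le> sum_mset m"
  shows "id_pi_coprod (nmult (mono s) c) (u,m) = (if m = mset s then c u else 0)"
proof -
  have fc: "finite (supp c)" using c by (simp add: cotensor_def nsym_def)
  have cc: "id_pi_coprod c (u',m') = (if m' = {#} then c u' else 0)" for u' m'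
    using c by (simp add: cotensor_def)
  define C where "C u1 m1 = (take (length u1) u = u1 \<and> m1 \<subseteq># m)" for u1 m1
  have split: "(of_bool (u1@u2 = u \<and> m1+m2 = m)::int) = of_bool (C u1 m1) * of_bool (u2 = drop (length u1) u \<and> m2 = m - m1)" for u1 u2 m1 m2
    unfolding C_def mset_split_iff append_eq_conv_conj by auto
  have Nsv: "N (s@v) u m = S s (\<lambda>u1 m1. of_bool (C u1 m1) * N v (drop (length u1) u) (m - m1))" for v
    unfolding N_def S_append split S_cmult ..
  define F where "F (u1::nat list) m1 = (\<Sum>v\<in>supp c. c v * N v (drop (length u1) u) (m - m1))" for u1 m1
  have "id_pi_coprod (nmult (mono s) c) (u,m) = (\<Sum>v\<in>supp c. c v * S s (\<lambda>u1 m1. of_bool (C u1 m1) * N v (drop (length u1) u) (m - m1)))"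
    by (simp add: phi_smul fc Nsv)
  also have "\<dots> = (\<Sum>v\<in>supp c. S s (\<lambda>u1 m1. of_bool (C u1 m1) * (c v * N v (drop (length u1) u) (m - m1))))"
    by (simp add: S_cmult[symmetric] mult.left_commute)
  also have "\<dots> = S s (\<lambda>u1 m1. \<Sum>v\<in>supp c. of_bool (C u1 m1) * (c v * N v (drop (length u1) u) (m - m1)))"
    by (rule S_sum[symmetric])
  also have "\<dots> = S s (\<lambda>u1 m1. of_bool (C u1 m1) * F u1 m1)"
    by (simp add: F_def sum_distrib_left)
  also have "\<dots> = S s (\<lambda>u1 m1. of_bool (C u1 m1) * (if m - m1 = {#} then c (drop (length u1) u) else 0))"
    by (simp add: F_def id_pi_N[symmetric] cc)
  also have "\<dots> = S s (\<lambda>u1 m1. if sum_list s \<le> sum_mset m1 then of_bool (C u1 m1) * (if m - m1 = {#} then c (drop (length u1) u) else 0) else 0)"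
  proof (rule arg_cong[where f="S s"], intro ext)
    fix u1 m1
    show "of_bool (C u1 m1) * (if m - m1 = {#} then c (drop (length u1) u) else 0) =
         (if sum_list s \<le> sum_mset m1 then of_bool (C u1 m1) * (if m - m1 = {#} then c (drop (length u1) u) else 0) else 0)"
    proof (cases "C u1 m1 \<and> m - m1 = {#}")
      case True
      then have "m1 = m" unfolding C_def by (simp add: Diff_eq_empty_iff_mset subset_mset.antisym)
      then show ?thesis using deg by simp
    qed auto
  qed
  also have "\<dots> = of_bool (C [] (mset s)) * (if m - mset s = {#} then c u else 0)"
    using S_top[where g="\<lambda>u1 m1. of_bool (C u1 m1) * (if m - m1 = {#} then c (drop (length u1) u) else 0)", OF s] by simp
  also have "\<dots> = (if m = mset s then c u else 0)"
    by (auto simp: C_def Diff_eq_empty_iff_mset subset_mset.antisym)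
  finally show ?thesis .
qed




lemma SS_nonzero: "SS w g \<noteq> 0 \<Longrightarrow> \<exists>(p,q)\<in>coprod_splits w. g p q \<noteq> 0"
proof -
  assume "SS w g \<noteq> 0"
  then obtain x where "x \<in> coprod_splits w" "(\<lambda>(p,q). g p q) x \<noteq> 0"
    unfolding SS_def by (rule sum.not_neutral_contains_not_neutral)
  then show ?thesis by (cases x) auto
qed

definition R :: "nat list \<Rightarrow> (nat multiset \<Rightarrow> nat multiset \<Rightarrow> 'a::comm_monoid_add) \<Rightarrow> 'a" where
  "R t H = S t (\<lambda>u m. H (mset u) m)"

lemma R_nz: "R (nz t) H = R t H"
  unfolding R_def by (rule S_nz)

lemma R_append: "R (s@t) H = S s (\<lambda>u1 m1. R t (\<lambda>M m2. H (mset u1 + M) (m1+m2)))"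
  unfolding R_def S_append by simp

lemma R_swap: "R (s@t) H = R (t@s) H"
  unfolding R_def S_append
  by (subst S_swap) (simp add: add.commute)

lemma R_perm: "mset t = mset t' \<Longrightarrow> R t H = R t' H"
proof (induction t arbitrary: t' H)
  case Nil then show ?case by simp
next
  case (Cons a t)
  have "a \<in> set t'" using Cons.prems by (metis list.set_intros(1) set_mset_mset)
  then obtain xs ys where t': "t' = xs @ a # ys" by (meson split_list)
  have mt: "mset t = mset (ys @ xs)" using Cons.prems t' by simp
  have "R t' H = R ((a # ys) @ xs) H" unfolding t' by (simp add: R_swap[of xs "a#ys"])
  also have "\<dots> = R ([a] @ (ys @ xs)) H" by simp
  also have "\<dots> = S [a] (\<lambda>u1 m1. R (ys@xs) (\<lambda>M m2. H (mset u1 + M) (m1+m2)))" by (rule R_append)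
  also have "\<dots> = S [a] (\<lambda>u1 m1. R t (\<lambda>M m2. H (mset u1 + M) (m1+m2)))" using Cons.IH[OF mt] by simp
  also have "\<dots> = R ([a] @ t) H" by (rule R_append[symmetric])
  finally show ?case by simp
qed

lemma R_sorted: "R t H = R (sorted_list_of_multiset (mset (nz t))) H"
  by (subst R_nz[symmetric]) (rule R_perm, simp)

lemma E1:
  assumes "finite U" "\<And>p q. (p,q)\<in>coprod_splits w \<Longrightarrow> nz p \<in> U"
  shows "S w (\<lambda>u1 m1. of_bool (m1 = m) * h u1) = (\<Sum>u\<in>U. h u * N w u m)"
proof -
  have "(\<Sum>u\<in>U. h u * N w u m) = (\<Sum>u\<in>U. S w (\<lambda>u' m'. h u * of_bool (u' = u \<and> m' = m)))"
    by (simp add: N_def S_cmult)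
  also have "\<dots> = S w (\<lambda>u' m'. \<Sum>u\<in>U. h u * of_bool (u' = u \<and> m' = m))"
    by (rule S_sum[symmetric])
  also have "\<dots> = S w (\<lambda>u1 m1. of_bool (m1 = m) * h u1)"
  proof (rule S_cong)
    fix p q assume "(p,q)\<in>coprod_splits w"
    then have inU: "nz p \<in> U" by (rule assms(2))
    have "(\<Sum>u\<in>U. h u * of_bool (nz p = u \<and> mset (nz q) = m)) = (\<Sum>u\<in>U. if u = nz p then of_bool (mset (nz q) = m) * h (nz p) else 0)"
      by (rule sum.cong) auto
    also have "\<dots> = of_bool (mset (nz q) = m) * h (nz p)" using assms(1) inU by simp
    finally show "(\<Sum>u\<in>U. h u * of_bool (nz p = u \<and> mset (nz q) = m)) = of_bool (mset (nz q) = m) * h (nz p)" .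
  qed
  finally show ?thesis by simp
qed

lemma E2:
  assumes "finite MM" "\<And>p q. (p,q)\<in>coprod_splits w \<Longrightarrow> mset (nz q) \<in> MM"
  shows "S w (\<lambda>u M. of_bool (u = v) * h M) = (\<Sum>M\<in>MM. h M * N w v M)"
proof -
  have "(\<Sum>M\<in>MM. h M * N w v M) = (\<Sum>M\<in>MM. S w (\<lambda>u' m'. h M * of_bool (u' = v \<and> m' = M)))"
    by (simp add: N_def S_cmult)
  also have "\<dots> = S w (\<lambda>u' m'. \<Sum>M\<in>MM. h M * of_bool (u' = v \<and> m' = M))"
    by (rule S_sum[symmetric])
  also have "\<dots> = S w (\<lambda>u M. of_bool (u = v) * h M)"
  proof (rule S_cong)
    fix p q assume "(p,q)\<in>coprod_splits w"
    then have inM: "mset (nz q) \<in> MM" by (rule assms(2))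
    have "(\<Sum>M\<in>MM. h M * of_bool (nz p = v \<and> mset (nz q) = M)) = (\<Sum>M\<in>MM. if M = mset (nz q) then of_bool (nz p = v) * h (mset (nz q)) else 0)"
      by (rule sum.cong) auto
    also have "\<dots> = of_bool (nz p = v) * h (mset (nz q))" using assms(1) inM by simp
    finally show "(\<Sum>M\<in>MM. h M * of_bool (nz p = v \<and> mset (nz q) = M)) = of_bool (nz p = v) * h (mset (nz q))" .
  qed
  finally show ?thesis by simp
qed

lemma coassoc_N:
  "S w (\<lambda>u1 m1. of_bool (m1 = m) * N u1 v m')
   = SS w (\<lambda>a t. of_bool (nz a = v) * SS t (\<lambda>b c. (of_bool (mset (nz b) = m' \<and> mset (nz c) = m)::int)))"
proof -
  have "S w (\<lambda>u1 m1. of_bool (m1 = m) * N u1 v m')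
     = SS w (\<lambda>p q. SS p (\<lambda>a b. of_bool (mset (nz q) = m) * (of_bool (nz a = v \<and> mset (nz b) = m')::int)))"
  proof -
    have h: "N (nz p) v m' = SS p (\<lambda>a b. of_bool (nz a = v \<and> mset (nz b) = m'))" for p
      unfolding N_def S_nz by (simp add: S_def)
    show ?thesis by (simp add: S_def h SS_cmult)
  qed
  also have "\<dots> = SS w (\<lambda>a t. SS t (\<lambda>b c. of_bool (mset (nz c) = m) * (of_bool (nz a = v \<and> mset (nz b) = m')::int)))"
    by (rule SS_coassoc)
  also have "\<dots> = SS w (\<lambda>a t. of_bool (nz a = v) * SS t (\<lambda>b c. (of_bool (mset (nz b) = m' \<and> mset (nz c) = m)::int)))"
    by (simp add: SS_cmult[symmetric]) (rule SS_cong, rule SS_cong, auto)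
  finally show ?thesis .
qed




lemma sum_mset_sl: "sum_list (sorted_list_of_multiset M) = sum_mset (M::nat multiset)"
  by (metis mset_sorted_list_of_multiset sum_mset_sum_list)

lemma nz_pos: "nz b \<noteq> [] \<Longrightarrow> 0 < sum_list b"
proof -
  assume "nz b \<noteq> []"
  then obtain e where "e \<in> set (nz b)" by (cases "nz b") auto
  then have "e \<noteq> 0" "e \<le> sum_list (nz b)" by (auto simp: nz_def intro: member_le_sum_list)
  then show ?thesis by (simp add: sum_nz)
qed

lemma T0_deg:
  assumes "SS t (\<lambda>b c. (of_bool (mset (nz b) = m' \<and> mset (nz c) = m)::int)) \<noteq> 0" "m' \<noteq> {#}"
  shows "sum_mset m < sum_list t"
proof -
  obtain b c where bc: "(b,c) \<in> coprod_splits t" "mset (nz b) = m'" "mset (nz c) = m"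
    using SS_nonzero[OF assms(1)] by (auto split: if_splits)
  have "nz b \<noteq> []" using bc(2) assms(2) by auto
  then have "0 < sum_list b" by (rule nz_pos)
  moreover have "sum_mset m = sum_list c" using bc(3) sum_mset_nz by metis
  ultimately show ?thesis using cs_sum[OF bc(1)] by linarith
qed

lemma top_coinv:
  assumes x: "x \<in> nsym"
    and top: "\<And>v M. d < sum_mset M \<Longrightarrow> id_pi_coprod x (v,M) = 0"
    and dm: "sum_mset m = d"
  shows "(\<lambda>u. id_pi_coprod x (u,m)) \<in> cotensor"
proof -
  define y where "y = (\<lambda>u. id_pi_coprod x (u,m))"
  have fx: "finite (supp x)" using x by (simp add: nsym_def)
  define U where "U = (\<Union>w\<in>supp x. (\<lambda>pq. nz (fst pq)) ` coprod_splits w)"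
  define MM where "MM = (\<Union>w\<in>supp x. (\<lambda>pq. mset (nz (snd pq))) ` coprod_splits w)"
  have fU: "finite U" unfolding U_def using fx by auto
  have fMM: "finite MM" unfolding MM_def using fx by auto
  have y_eq: "y u = (\<Sum>w\<in>supp x. x w * N w u m)" for u unfolding y_def by (rule id_pi_N)
  have supp_y: "supp y \<subseteq> U"
  proof
    fix u assume "u \<in> supp y"
    then have "(\<Sum>w\<in>supp x. x w * N w u m) \<noteq> 0" by (simp add: supp_def y_eq)
    then obtain w where w: "w \<in> supp x" "x w * N w u m \<noteq> 0"
      by (rule sum.not_neutral_contains_not_neutral)
    then obtain p q where "(p,q) \<in> coprod_splits w" "nz p = u" using N_nonzero[of w u m] by auto
    then show "u \<in> U" unfolding U_def using w(1) by force
  qed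
  have U0: "0 \<notin> set u" if "u \<in> U" for u using that zero_not_nz unfolding U_def by auto
  have ynsym: "y \<in> nsym"
    unfolding nsym_def using supp_y fU U0 by (auto intro: finite_subset simp: supp_def)
  have "id_pi_coprod y (v,m') = (if m' = {#} then y v else 0)" for v m'
  proof (cases "m' = {#}")
    case True
    then show ?thesis using nsym_counit[OF ynsym] by simp
  next
    case False
    define T0 where "T0 M = SS (sorted_list_of_multiset M) (\<lambda>b c. (of_bool (mset (nz b) = m' \<and> mset (nz c) = m)::int))" for M
    have T0_eq: "SS t (\<lambda>b c. (of_bool (mset (nz b) = m' \<and> mset (nz c) = m)::int)) = T0 (mset (nz t))" for t
    proof -
      have "SS t (\<lambda>b c. (of_bool (mset (nz b) = m' \<and> mset (nz c) = m)::int)) = R t (\<lambda>B C. of_bool (B = m' \<and> C = m))"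
        by (simp add: R_def S_def)
      also have "\<dots> = R (sorted_list_of_multiset (mset (nz t))) (\<lambda>B C. of_bool (B = m' \<and> C = m))"
        by (rule R_sorted)
      also have "\<dots> = T0 (mset (nz t))" by (simp add: R_def S_def T0_def)
      finally show ?thesis .
    qed
    have inner: "(\<Sum>u\<in>U. N u v m' * N w u m) = (\<Sum>M\<in>MM. T0 M * N w v M)" if w: "w \<in> supp x" for w
    proof -
      have "(\<Sum>u\<in>U. N u v m' * N w u m) = S w (\<lambda>u1 m1. of_bool (m1 = m) * N u1 v m')"
        by (rule E1[symmetric], rule fU) (use w in \<open>force simp: U_def\<close>)
      also have "\<dots> = SS w (\<lambda>a t. of_bool (nz a = v) * T0 (mset (nz t)))"
        by (simp add: coassoc_N T0_eq)
      also have "\<dots> = S w (\<lambda>u M. of_bool (u = v) * T0 M)" by (simp add: S_def)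
      also have "\<dots> = (\<Sum>M\<in>MM. T0 M * N w v M)"
        by (rule E2, rule fMM) (use w in \<open>force simp: MM_def\<close>)
      finally show ?thesis .
    qed
    have "id_pi_coprod y (v,m') = (\<Sum>u\<in>U. y u * N u v m')"
      by (rule ph_eq[OF fU supp_y])
    also have "\<dots> = (\<Sum>u\<in>U. \<Sum>w\<in>supp x. x w * (N u v m' * N w u m))"
      by (rule sum.cong) (simp_all add: y_eq sum_distrib_left sum_distrib_right mult_ac)
    also have "\<dots> = (\<Sum>w\<in>supp x. x w * (\<Sum>u\<in>U. N u v m' * N w u m))"
      by (subst sum.swap) (simp add: sum_distrib_left)
    also have "\<dots> = (\<Sum>w\<in>supp x. x w * (\<Sum>M\<in>MM. T0 M * N w v M))"
      by (rule sum.cong) (simp_all add: inner)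
    also have "\<dots> = (\<Sum>M\<in>MM. T0 M * (\<Sum>w\<in>supp x. x w * N w v M))"
      by (simp add: sum_distrib_left sum_distrib_right mult_ac sum.swap[of _ "supp x"])
    also have "\<dots> = (\<Sum>M\<in>MM. T0 M * id_pi_coprod x (v,M))"
      by (simp add: id_pi_N)
    also have "\<dots> = 0"
    proof (rule sum.neutral, rule ballI)
      fix M assume "M \<in> MM"
      show "T0 M * id_pi_coprod x (v,M) = 0"
      proof (cases "T0 M = 0")
        case False
        then have "sum_mset m < sum_list (sorted_list_of_multiset M)"
          unfolding T0_def using T0_deg \<open>m' \<noteq> {#}\<close> by blast
        then have "d < sum_mset M" using dm sum_mset_sl by simp
        then show ?thesis using top by simp
      qed simp
    qed
    finally show ?thesis using False by simp
  qed
  then show ?thesis unfolding cotensor_def y_def[symmetric] using ynsym by auto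
qed




lemma supp_add: "supp (\<lambda>w. a w + b w) \<subseteq> supp a \<union> supp (b::_\<Rightarrow>int)"
  by (auto simp: supp_def)

lemma supp_diff: "supp (\<lambda>w. a w - b w) \<subseteq> supp a \<union> supp (b::_\<Rightarrow>int)"
  by (auto simp: supp_def)

lemma supp_sum: "supp (\<lambda>w. \<Sum>i\<in>I. X i w) \<subseteq> (\<Union>i\<in>I. supp (X i :: _ \<Rightarrow> int))"
  by (auto simp: supp_def intro: sum.not_neutral_contains_not_neutral)

lemma phi_add: "finite (supp a) \<Longrightarrow> finite (supp b) \<Longrightarrow>
  id_pi_coprod (\<lambda>w. a w + b w) (u,m) = id_pi_coprod a (u,m) + id_pi_coprod b (u,m)"
  apply (subst (1 2 3) ph_eq[of "supp a \<union> supp b"])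
  using supp_add[of a b] by (auto simp: sum.distrib algebra_simps)

lemma phi_diff: "finite (supp a) \<Longrightarrow> finite (supp b) \<Longrightarrow>
  id_pi_coprod (\<lambda>w. a w - b w) (u,m) = id_pi_coprod a (u,m) - id_pi_coprod b (u,m)"
  apply (subst (1 2 3) ph_eq[of "supp a \<union> supp b"])
  using supp_diff[of a b] by (auto simp: sum_subtractf algebra_simps)

lemma phi_sum: "finite I \<Longrightarrow> (\<And>i. i \<in> I \<Longrightarrow> finite (supp (X i))) \<Longrightarrow>
  id_pi_coprod (\<lambda>w. \<Sum>i\<in>I. X i w) (u,m) = (\<Sum>i\<in>I. id_pi_coprod (X i) (u,m))"
proof -
  assume fI: "finite I" and fX: "\<And>i. i \<in> I \<Longrightarrow> finite (supp (X i))"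
  define V where "V = (\<Union>i\<in>I. supp (X i))"
  have fV: "finite V" using fI fX by (simp add: V_def)
  have "id_pi_coprod (\<lambda>w. \<Sum>i\<in>I. X i w) (u,m) = (\<Sum>w\<in>V. (\<Sum>i\<in>I. X i w) * N w u m)"
    by (rule ph_eq[OF fV]) (use supp_sum[of X I] in \<open>simp add: V_def\<close>)
  also have "\<dots> = (\<Sum>i\<in>I. \<Sum>w\<in>V. X i w * N w u m)"
    by (simp add: sum_distrib_right sum.swap[of _ V])
  also have "\<dots> = (\<Sum>i\<in>I. id_pi_coprod (X i) (u,m))"
    by (rule sum.cong[OF refl], rule ph_eq[symmetric, OF fV]) (auto simp: V_def)
  finally show ?thesis .
qed

lemma nsym_add: "a \<in> nsym \<Longrightarrow> b \<in> nsym \<Longrightarrow> (\<lambda>w. a w + b w) \<in> nsym"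
  unfolding nsym_def using supp_add[of a b] by (auto intro: finite_subset) (metis add.right_neutral)

lemma nsym_diff: "a \<in> nsym \<Longrightarrow> b \<in> nsym \<Longrightarrow> (\<lambda>w. a w - b w) \<in> nsym"
  unfolding nsym_def using supp_diff[of a b] by (auto intro: finite_subset) metis

lemma nsym_sum: "finite I \<Longrightarrow> (\<And>i. i \<in> I \<Longrightarrow> X i \<in> nsym) \<Longrightarrow> (\<lambda>w. \<Sum>i\<in>I. X i w) \<in> nsym"
  unfolding nsym_def using supp_sum[of X I]
  by (auto intro: finite_subset elim!: sum.not_neutral_contains_not_neutral)

lemma zero_cot: "(\<lambda>_. 0) \<in> cotensor"
  by (simp add: cotensor_def nsym_def supp_def id_pi_coprod_def)

lemma cot_nsym: "c \<in> cotensor \<Longrightarrow> c \<in> nsym" by (simp add: cotensor_def)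

lemma cot_add: "a \<in> cotensor \<Longrightarrow> b \<in> cotensor \<Longrightarrow> (\<lambda>w. a w + b w) \<in> cotensor"
  unfolding cotensor_def using nsym_add[of a b]
  by (auto simp: phi_add nsym_def)

lemma cot_diff: "a \<in> cotensor \<Longrightarrow> b \<in> cotensor \<Longrightarrow> (\<lambda>w. a w - b w) \<in> cotensor"
  unfolding cotensor_def using nsym_diff[of a b]
  by (auto simp: phi_diff nsym_def)

lemma nmult_zero: "nmult (mono s) (\<lambda>_. 0) = (\<lambda>_. 0)"
  by (simp add: fun_eq_iff nmult_mono)

lemma nmult_add: "nmult (mono s) (\<lambda>w. a w + b w) w = nmult (mono s) a w + nmult (mono s) b w"
  by (simp add: nmult_mono)

lemma nmult_diff: "nmult (mono s) (\<lambda>w. a w - b w) w = nmult (mono s) a w - nmult (mono s) b w"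
  by (simp add: nmult_mono)

lemma nmult_nsym: "0 \<notin> set s \<Longrightarrow> c \<in> nsym \<Longrightarrow> nmult (mono s) c \<in> nsym"
proof -
  assume s: "0 \<notin> set s" and c: "c \<in> nsym"
  have "finite (supp (nmult (mono s) c))"
    using supp_nmult_mono[of s c] c by (auto simp: nsym_def intro: finite_subset)
  moreover have "0 \<notin> set w" if "nmult (mono s) c w \<noteq> 0" for w
  proof -
    have "w \<in> (\<lambda>v. s@v) ` supp c" using that supp_nmult_mono[of s c] by (auto simp: supp_def)
    then obtain v where "w = s@v" "c v \<noteq> 0" by (auto simp: supp_def)
    then show ?thesis using s c by (auto simp: nsym_def)
  qed
  ultimately show ?thesis by (auto simp: nsym_def)
qed

lemma mult_map_eq: "finite A \<Longrightarrow> {s. f s \<noteq> (\<lambda>_. 0)} \<subseteq> A \<Longrightarrow> mult_map f w = (\<Sum>s\<in>A. nmult (mono s) (f s) w)"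
  unfolding mult_map_def
  by (rule sum.mono_neutral_left) (auto simp: nmult_zero)

lemma dom_finite: "f \<in> symt_tensor_cotensor \<Longrightarrow> finite {s. f s \<noteq> (\<lambda>_. 0)}"
  by (simp add: symt_tensor_cotensor_def)

lemma dom_basis: "f \<in> symt_tensor_cotensor \<Longrightarrow> f s \<noteq> (\<lambda>_. 0) \<Longrightarrow> s \<in> symt_basis"
  by (auto simp: symt_tensor_cotensor_def)

lemma dom_cot: "f \<in> symt_tensor_cotensor \<Longrightarrow> f s \<in> cotensor"
  by (auto simp: symt_tensor_cotensor_def)

lemma mult_map_nsym: "f \<in> symt_tensor_cotensor \<Longrightarrow> mult_map f \<in> nsym"
proof -
  assume f: "f \<in> symt_tensor_cotensor"
  have "mult_map f = (\<lambda>w. \<Sum>s\<in>{s. f s \<noteq> (\<lambda>_. 0)}. nmult (mono s) (f s) w)"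
    by (simp add: mult_map_def)
  also have "\<dots> \<in> nsym"
    using f by (intro nsym_sum dom_finite nmult_nsym cot_nsym dom_cot)
      (auto dest: dom_basis simp: symt_basis_def)
  finally show ?thesis .
qed

lemma sorted_mset_eq: "sorted s \<Longrightarrow> sorted t \<Longrightarrow> mset s = mset (t::nat list) \<Longrightarrow> s = t"
  by (metis properties_for_sort)

lemma mult_map_inj: "inj_on mult_map symt_tensor_cotensor"
proof (rule inj_onI)
  fix f g assume f: "f \<in> symt_tensor_cotensor" and g: "g \<in> symt_tensor_cotensor" and eq: "mult_map f = mult_map g"
  define h where "h s = (\<lambda>w. f s w - g s w)" for s
  define D where "D = {s. h s \<noteq> (\<lambda>_. 0)}"
  have fD: "finite D"
  proof (rule finite_subset)
    show "D \<subseteq> {s. f s \<noteq> (\<lambda>_. 0)} \<union> {s. g s \<noteq> (\<lambda>_. 0)}" by (auto simp: D_def h_def)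
  qed (use f g dom_finite in auto)
  have hcot: "h s \<in> cotensor" for s unfolding h_def using f g by (intro cot_diff dom_cot)
  have Dbasis: "s \<in> symt_basis" if "s \<in> D" for s
  proof -
    have "f s \<noteq> (\<lambda>_. 0) \<or> g s \<noteq> (\<lambda>_. 0)" using that by (auto simp: D_def h_def)
    then show ?thesis using f g dom_basis by blast
  qed
  have zero: "(\<Sum>s\<in>D. nmult (mono s) (h s) w) = 0" for w
  proof -
    define A where "A = {s. f s \<noteq> (\<lambda>_. 0)} \<union> {s. g s \<noteq> (\<lambda>_. 0)}"
    have fA: "finite A" using f g dom_finite by (auto simp: A_def)
    have DA: "D \<subseteq> A" by (auto simp: D_def h_def A_def)
    have "0 = mult_map f w - mult_map g w" using eq by simp
    also have "\<dots> = (\<Sum>s\<in>A. nmult (mono s) (f s) w) - (\<Sum>s\<in>A. nmult (mono s) (g s) w)"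
      using mult_map_eq[OF fA, of f w] mult_map_eq[OF fA, of g w] by (auto simp: A_def)
    also have "\<dots> = (\<Sum>s\<in>A. nmult (mono s) (h s) w)"
      by (simp add: h_def nmult_diff sum_subtractf)
    also have "\<dots> = (\<Sum>s\<in>D. nmult (mono s) (h s) w)"
      by (rule sum.mono_neutral_right[OF fA DA]) (auto simp: D_def nmult_zero)
    finally show ?thesis by simp
  qed
  have "D = {}"
  proof (rule ccontr)
    assume "D \<noteq> {}"
    define dm where "dm = Max (sum_list ` D)"
    have "dm \<in> sum_list ` D" unfolding dm_def using fD \<open>D \<noteq> {}\<close> by simp
    then obtain s0 where s0: "s0 \<in> D" "sum_list s0 = dm" by auto
    have le: "sum_list s \<le> sum_list s0" if "s \<in> D" for s
      using that fD s0(2) unfolding dm_def by simp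
    have "h s0 u = 0" for u
    proof -
      have "0 = id_pi_coprod (\<lambda>w. \<Sum>s\<in>D. nmult (mono s) (h s) w) (u, mset s0)"
        by (simp add: zero id_pi_coprod_def supp_def)
      also have "\<dots> = (\<Sum>s\<in>D. id_pi_coprod (nmult (mono s) (h s)) (u, mset s0))"
      proof (rule phi_sum[OF fD])
        fix s assume "s \<in> D"
        then have "nmult (mono s) (h s) \<in> nsym"
          using hcot cot_nsym nmult_nsym Dbasis by (auto simp: symt_basis_def)
        then show "finite (supp (nmult (mono s) (h s)))" by (simp add: nsym_def)
      qed
      also have "\<dots> = (\<Sum>s\<in>D. if s = s0 then h s0 u else 0)"
      proof (rule sum.cong[OF refl])
        fix s assume sD: "s \<in> D"
        have "id_pi_coprod (nmult (mono s) (h s)) (u, mset s0) = (if mset s0 = mset s then h s u else 0)"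
          using PhiSC[OF hcot[of s], where s=s and m="mset s0" and u=u] Dbasis[OF sD] le[OF sD]
          by (simp add: symt_basis_def sum_mset_sum_list)
        also have "\<dots> = (if s = s0 then h s0 u else 0)"
          using Dbasis[OF sD] Dbasis[OF s0(1)] sorted_mset_eq[of s s0]
          by (auto simp: symt_basis_def)
        finally show "id_pi_coprod (nmult (mono s) (h s)) (u, mset s0) = (if s = s0 then h s0 u else 0)" .
      qed
      also have "\<dots> = h s0 u" using fD s0(1) by simp
      finally show ?thesis by simp
    qed
    then have "h s0 = (\<lambda>_. 0)" by auto
    then show False using s0(1) by (simp add: D_def)
  qed
  then have "f s = g s" for s
    unfolding D_def h_def by (auto simp: fun_eq_iff)
  then show "f = g" by auto
qed




lemma length_le_sum: "0 \<notin> set s \<Longrightarrow> length s \<le> sum_list (s::nat list)"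
  by (induction s) auto

lemma phi_zero_mem: "0 \<in># M \<Longrightarrow> id_pi_coprod x (v,M) = 0"
  by (simp add: id_pi_N N_zero_mem)

lemma base_case:
  assumes x: "x \<in> nsym" and b: "\<And>v M. 0 < sum_mset M \<Longrightarrow> id_pi_coprod x (v,M) = 0"
  shows "x \<in> mult_map ` symt_tensor_cotensor"
proof -
  have "id_pi_coprod x (v,M) = (if M = {#} then x v else 0)" for v M
  proof (cases "M = {#}")
    case True then show ?thesis using nsym_counit[OF x] by simp
  next
    case False
    then obtain e where e: "e \<in># M" by (meson multiset_nonemptyE)
    show ?thesis
    proof (cases "e = 0")
      case True then show ?thesis using e phi_zero_mem by auto
    next
      case False
      obtain M' where "M = add_mset e M'" using e by (metis multi_member_split)
      then have "0 < sum_mset M" using False by simp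
      then show ?thesis using b \<open>M \<noteq> {#}\<close> by simp
    qed
  qed
  then have xc: "x \<in> cotensor" using x by (simp add: cotensor_def)
  define f where "f s = (if s = [] then x else (\<lambda>_. 0))" for s :: "nat list"
  have fd: "f \<in> symt_tensor_cotensor"
    unfolding symt_tensor_cotensor_def
  proof (intro CollectI conjI allI impI)
    show "finite {s. f s \<noteq> (\<lambda>_. 0)}" by (rule finite_subset[of _ "{[]}"]) (auto simp: f_def)
  next
    fix s assume "s \<notin> symt_basis" then show "f s = (\<lambda>_. 0)" by (auto simp: f_def symt_basis_def)
  next
    fix s show "f s \<in> cotensor" using xc zero_cot by (simp add: f_def)
  qed
  have "mult_map f = x"
  proof
    fix w
    have "mult_map f w = (\<Sum>s\<in>{[]}. nmult (mono s) (f s) w)"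
      by (rule mult_map_eq) (auto simp: f_def)
    also have "\<dots> = x w" by (simp add: f_def nmult_mono)
    finally show "mult_map f w = x w" .
  qed
  then show ?thesis using fd by blast
qed

lemma step_case:
  assumes IH: "\<And>x. x \<in> nsym \<Longrightarrow> (\<And>v M. d < sum_mset M \<Longrightarrow> id_pi_coprod x (v,M) = 0) \<Longrightarrow> x \<in> mult_map ` symt_tensor_cotensor"
    and x: "x \<in> nsym" and b: "\<And>v M. Suc d < sum_mset M \<Longrightarrow> id_pi_coprod x (v,M) = 0"
  shows "x \<in> mult_map ` symt_tensor_cotensor"
proof -
  define Sd where "Sd = {s. sorted s \<and> 0 \<notin> set s \<and> sum_list s = Suc d}"
  have fSd: "finite Sd"
  proof (rule finite_subset)
    show "Sd \<subseteq> {xs. set xs \<subseteq> {..Suc d} \<and> length xs \<le> Suc d}"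
    proof
      fix s assume "s \<in> Sd"
      then have h: "0 \<notin> set s" "sum_list s = Suc d" by (auto simp: Sd_def)
      have "e \<le> Suc d" if "e \<in> set s" for e using member_le_sum_list[OF that] h(2) by simp
      moreover have "length s \<le> Suc d" using length_le_sum[OF h(1)] h(2) by simp
      ultimately show "s \<in> {xs. set xs \<subseteq> {..Suc d} \<and> length xs \<le> Suc d}" by auto
    qed
  qed (rule finite_lists_length_le, simp)
  define y where "y s = (\<lambda>u. id_pi_coprod x (u, mset s))" for s
  have ycot: "y s \<in> cotensor" if "s \<in> Sd" for s
    unfolding y_def
    by (rule top_coinv[OF x b]) (use that in \<open>simp_all add: Sd_def sum_mset_sum_list\<close>)
  have Sd0: "0 \<notin> set s" if "s \<in> Sd" for s using that by (simp add: Sd_def)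
  define z where "z s = nmult (mono s) (y s)" for s
  have znsym: "z s \<in> nsym" if "s \<in> Sd" for s
    unfolding z_def using that by (intro nmult_nsym Sd0 cot_nsym ycot)
  define x' where "x' = (\<lambda>w. x w - (\<Sum>s\<in>Sd. z s w))"
  have zsum: "(\<lambda>w. \<Sum>s\<in>Sd. z s w) \<in> nsym" using fSd znsym by (intro nsym_sum)
  have x'n: "x' \<in> nsym" unfolding x'_def using x zsum by (rule nsym_diff)
  have x'b: "id_pi_coprod x' (v,M) = 0" if "d < sum_mset M" for v M
  proof -
    have "id_pi_coprod x' (v,M) = id_pi_coprod x (v,M) - id_pi_coprod (\<lambda>w. \<Sum>s\<in>Sd. z s w) (v,M)"
      unfolding x'_def using x zsum by (intro phi_diff) (simp_all add: nsym_def)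
    also have "id_pi_coprod (\<lambda>w. \<Sum>s\<in>Sd. z s w) (v,M) = (\<Sum>s\<in>Sd. id_pi_coprod (z s) (v,M))"
      using fSd znsym by (intro phi_sum) (simp_all add: nsym_def)
    also have "\<dots> = (\<Sum>s\<in>Sd. if M = mset s then y s v else 0)"
    proof (rule sum.cong[OF refl])
      fix s assume s: "s \<in> Sd"
      show "id_pi_coprod (z s) (v,M) = (if M = mset s then y s v else 0)"
        unfolding z_def
        by (rule PhiSC[OF ycot[OF s] Sd0[OF s]]) (use s that in \<open>simp add: Sd_def\<close>)
    qed
    also have "id_pi_coprod x (v,M) - \<dots> = 0"
    proof (cases "Suc d < sum_mset M")
      case True
      have "(\<Sum>s\<in>Sd. if M = mset s then y s v else 0) = 0"
        by (rule sum.neutral) (use True in \<open>auto simp: Sd_def sum_mset_sum_list\<close>)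
      then show ?thesis using b[OF True] by simp
    next
      case False
      then have sM: "sum_mset M = Suc d" using that by simp
      show ?thesis
      proof (cases "0 \<in># M")
        case True
        have "(\<Sum>s\<in>Sd. if M = mset s then y s v else 0) = 0"
          by (rule sum.neutral) (use True in \<open>auto simp: Sd_def\<close>)
        then show ?thesis using phi_zero_mem[OF True] by simp
      next
        case False
        define s0 where "s0 = sorted_list_of_multiset M"
        have s0: "s0 \<in> Sd" unfolding Sd_def s0_def using False sM
          by (simp add: sum_mset_sl)
        have "(\<Sum>s\<in>Sd. if M = mset s then y s v else 0) = (\<Sum>s\<in>Sd. if s = s0 then y s0 v else 0)"
        proof (rule sum.cong[OF refl])
          fix s assume "s \<in> Sd"
          then have "sorted s" by (simp add: Sd_def)
          then have "M = mset s \<longleftrightarrow> s = s0" unfolding s0_def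
            by (auto simp: sorted_sort_id)
          then show "(if M = mset s then y s v else 0) = (if s = s0 then y s0 v else 0)" by auto
        qed
        also have "\<dots> = y s0 v" using fSd s0 by simp
        also have "\<dots> = id_pi_coprod x (v,M)" by (simp add: y_def s0_def)
        finally show ?thesis by simp
      qed
    qed
    finally show ?thesis .
  qed
  obtain f' where f': "f' \<in> symt_tensor_cotensor" "mult_map f' = x'"
    using IH[OF x'n x'b] by blast
  define g where "g s = (if s \<in> Sd then y s else (\<lambda>_. 0))" for s
  define f where "f s = (\<lambda>w. f' s w + g s w)" for s
  have gcot: "g s \<in> cotensor" for s using ycot zero_cot by (simp add: g_def)
  have fd: "f \<in> symt_tensor_cotensor"
    unfolding symt_tensor_cotensor_def
  proof (intro CollectI conjI allI impI)
    show "finite {s. f s \<noteq> (\<lambda>_. 0)}"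
    proof (rule finite_subset)
      show "{s. f s \<noteq> (\<lambda>_. 0)} \<subseteq> {s. f' s \<noteq> (\<lambda>_. 0)} \<union> Sd"
        by (auto simp: f_def g_def)
    qed (use dom_finite[OF f'(1)] fSd in auto)
  next
    fix s assume "s \<notin> symt_basis"
    then have "f' s = (\<lambda>_. 0)" "s \<notin> Sd" using dom_basis[OF f'(1)] by (auto simp: Sd_def symt_basis_def)
    then show "f s = (\<lambda>_. 0)" by (simp add: f_def g_def)
  next
    fix s show "f s \<in> cotensor" unfolding f_def using dom_cot[OF f'(1)] gcot by (rule cot_add)
  qed
  have "mult_map f = x"
  proof
    fix w
    define A where "A = {s. f' s \<noteq> (\<lambda>_. 0)} \<union> Sd"
    have fA: "finite A" using dom_finite[OF f'(1)] fSd by (simp add: A_def)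
    have "mult_map f w = (\<Sum>s\<in>A. nmult (mono s) (f s) w)"
      by (rule mult_map_eq[OF fA]) (auto simp: A_def f_def g_def)
    also have "\<dots> = (\<Sum>s\<in>A. nmult (mono s) (f' s) w) + (\<Sum>s\<in>A. nmult (mono s) (g s) w)"
      by (simp add: f_def nmult_add sum.distrib)
    also have "(\<Sum>s\<in>A. nmult (mono s) (f' s) w) = mult_map f' w"
      by (rule mult_map_eq[OF fA, symmetric]) (auto simp: A_def)
    also have "(\<Sum>s\<in>A. nmult (mono s) (g s) w) = (\<Sum>s\<in>Sd. z s w)"
    proof -
      have "(\<Sum>s\<in>A. nmult (mono s) (g s) w) = (\<Sum>s\<in>Sd. nmult (mono s) (g s) w)"
        by (rule sum.mono_neutral_right[OF fA]) (auto simp: A_def g_def nmult_zero)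
      also have "\<dots> = (\<Sum>s\<in>Sd. z s w)" by (rule sum.cong) (auto simp: g_def z_def)
      finally show ?thesis .
    qed
    also have "mult_map f' w + (\<Sum>s\<in>Sd. z s w) = x w" using f'(2) by (simp add: x'_def)
    finally show "mult_map f w = x w" .
  qed
  then show ?thesis using fd by blast
qed

lemma surj_aux: "x \<in> nsym \<Longrightarrow> (\<And>v M. d < sum_mset M \<Longrightarrow> id_pi_coprod x (v,M) = 0) \<Longrightarrow> x \<in> mult_map ` symt_tensor_cotensor"
proof (induction d arbitrary: x)
  case 0 show ?case by (rule base_case[OF "0.prems"(1) "0.prems"(2)])
next
  case (Suc d) show ?case by (rule step_case[OF Suc.IH Suc.prems(1) Suc.prems(2)])
qed

lemma mult_map_surj: "x \<in> nsym \<Longrightarrow> x \<in> mult_map ` symt_tensor_cotensor"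
proof -
  assume x: "x \<in> nsym"
  define D where "D = (\<Sum>w\<in>supp x. sum_list w)"
  have fx: "finite (supp x)" using x by (simp add: nsym_def)
  have bd: "id_pi_coprod x (v,M) = 0" if "D < sum_mset M" for v M
  proof -
    have "N w v M = 0" if "w \<in> supp x" for w
    proof (rule ccontr)
      assume "N w v M \<noteq> 0"
      then have "sum_mset M \<le> sum_list w" by (rule N_deg)
      also have "\<dots> \<le> D" unfolding D_def by (rule member_le_sum) (use fx that in auto)
      finally show False using \<open>D < sum_mset M\<close> by simp
    qed
    then show ?thesis by (simp add: id_pi_N)
  qed
  show ?thesis by (rule surj_aux[OF x bd])
qed

theorem mainTheorem15:
  shows "bij_betw mult_map symt_tensor_cotensor nsym"
  unfolding bij_betw_def
proof
  show "inj_on mult_map symt_tensor_cotensor" by (rule mult_map_inj)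
  show "mult_map ` symt_tensor_cotensor = nsym"
    using mult_map_nsym mult_map_surj by blast
qed


end
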